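(* The canonical model $\langle W,\mathcal{N},V\rangle$ for IML1 is an nIML1-model.
   Context: Formulas are built from a denumerable set $PV$ of propositional variables and $\bot$ using $\land,\lor,\rightarrow$ and unary $\Delta$. The axioms of IML1 are all instances of the axiom schemes of intuitionistic propositional calculus, of K: $\Delta(\varphi\rightarrow\psi)\rightarrow(\Delta\varphi\rightarrow\Delta\psi)$ and of T: $\Delta\varphi\rightarrow\varphi$. An IML1-theory is a set of formulas containing all axioms and closed under modus ponens and under RN ($\varphi\in w\Rightarrow\Delta\varphi\in w$). A theory $w$ is prime if $\bot\notin w$ and $\varphi\lor\psi\in w$ iff ($\varphi\in w$ or $\psi\in w$). Canonical model: $W$ = set of prime IML1-theories; $A_w=\{v\in W:w\subseteq v\}$, $B_w=\{v\in W:\forall\varphi\,(\Delta\varphi\in w\Rightarrow\varphi\in v)\}$, $\mathcal{N}_w=\{X\subseteq W: A_w\subseteq X\subseteq B_w\}$; $V(q)=\{w\in W:q\in w\}$. An nIML1-model is a triple $\langle W,\mathcal{N},V\rangle$ with $W\neq\emptyset$, $\mathcal{N}:W\to P(P(W))$ satisfying for all $w$: (a) $w\in\bigcap\mathcal{N}_w$; (b) $\bigcap\mathcal{N}_w\in\mathcal{N}_w$; (c) $u\in\bigcap\mathcal{N}_w\Rightarrow\bigcap\mathcal{N}_u\subseteq\bigcap\mathcal{N}_w$; (d) $\bigcap\mathcal{N}_w\subseteq X\subseteq\bigcup\mathcal{N}_w\Rightarrow X\in\mathcal{N}_w$; (e) $u\in\bigcap\mathcal{N}_w\Rightarrow\bigcup\mathcal{N}_u\subseteq\bigcup\mathcal{N}_w$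 (where $\bigcap\mathcal{N}_w$, $\bigcup\mathcal{N}_w$ are the intersection and union of the family $\mathcal{N}_w$), and $V:PV\to P(W)$ with $w\in V(q)\Rightarrow\bigcap\mathcal{N}_w\subseteq V(q)$. *)

theory Defs
  imports Main
begin

datatype fm =
    Var nat
  | Bot
  | And fm fm
  | Or fm fm
  | Imp fm fm
  | Dlt fm

inductive iml1_axiom :: "fm \<Rightarrow> bool" where
  ipc1: "iml1_axiom (Imp A (Imp B A))"
| ipc2: "iml1_axiom (Imp (Imp A (Imp B C)) (Imp (Imp A B) (Imp A C)))"
| ipc3: "iml1_axiom (Imp (And A B) A)"
| ipc4: "iml1_axiom (Imp (And A B) B)"
| ipc5: "iml1_axiom (Imp A (Imp B (And A B)))"
| ipc6: "iml1_axiom (Imp A (Or A B))"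
| ipc7: "iml1_axiom (Imp B (Or A B))"
| ipc8: "iml1_axiom (Imp (Imp A C) (Imp (Imp B C) (Imp (Or A B) C)))"
| ipc9: "iml1_axiom (Imp Bot A)"
| axK:  "iml1_axiom (Imp (Dlt (Imp A B)) (Imp (Dlt A) (Dlt B)))"
| axT:  "iml1_axiom (Imp (Dlt A) A)"

definition iml1_theory :: "fm set \<Rightarrow> bool" where
  "iml1_theory w \<longleftrightarrow>
     (\<forall>A. iml1_axiom A \<longrightarrow> A \<in> w) \<and>
     (\<forall>A B. A \<in> w \<longrightarrow> Imp A B \<in> w \<longrightarrow> B \<in> w) \<and>
     (\<forall>A. A \<in> w \<longrightarrow> Dlt A \<in> w)"

definition prime_theory :: "fm set \<Rightarrow> bool" where
  "prime_theory w \<longleftrightarrow> iml1_theory w \<and> Bot \<notin> w \<and>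
     (\<forall>A B. Or A B \<in> w \<longleftrightarrow> (A \<in> w \<or> B \<in> w))"

definition canW :: "fm set set" where
  "canW = {w. prime_theory w}"

definition canA :: "fm set \<Rightarrow> fm set set" where
  "canA w = {v \<in> canW. w \<subseteq> v}"

definition canB :: "fm set \<Rightarrow> fm set set" where
  "canB w = {v \<in> canW. \<forall>A. Dlt A \<in> w \<longrightarrow> A \<in> v}"

definition canN :: "fm set \<Rightarrow> fm set set set" where
  "canN w = {X. X \<subseteq> canW \<and> canA w \<subseteq> X \<and> X \<subseteq> canB w}"

definition canV :: "nat \<Rightarrow> fm set set" where
  "canV q = {w \<in> canW. Var q \<in> w}"

definition nIML1_model :: "'w set \<Rightarrow> ('w \<Rightarrow> 'w set set) \<Rightarrow> (nat \<Rightarrow> 'w set) \<Rightarrow> bool" where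
  "nIML1_model W N V \<longleftrightarrow>
     W \<noteq> {} \<and>
     (\<forall>w\<in>W. N w \<subseteq> Pow W) \<and>
     (\<forall>q. V q \<subseteq> W) \<and>
     (\<forall>w\<in>W.
        w \<in> \<Inter>(N w) \<and>
        \<Inter>(N w) \<in> N w \<and>
        (\<forall>u. u \<in> \<Inter>(N w) \<longrightarrow> \<Inter>(N u) \<subseteq> \<Inter>(N w)) \<and>
        (\<forall>X. \<Inter>(N w) \<subseteq> X \<and> X \<subseteq> \<Union>(N w) \<longrightarrow> X \<in> N w) \<and>
        (\<forall>u. u \<in> \<Inter>(N w) \<longrightarrow> \<Union>(N u) \<subseteq> \<Union>(N w))) \<and>
     (\<forall>q. \<forall>w\<in>W. w \<in> V q \<longrightarrow> \<Inter>(N w) \<subseteq> V q)"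

end

theory Submission
  imports Defs
begin

fun ev :: "fm \<Rightarrow> bool" where
  "ev (Var n) = False"
| "ev Bot = False"
| "ev (And a b) = (ev a \<and> ev b)"
| "ev (Or a b) = (ev a \<or> ev b)"
| "ev (Imp a b) = (ev a \<longrightarrow> ev b)"
| "ev (Dlt a) = ev a"

lemma ax_ev: "iml1_axiom A \<Longrightarrow> ev A"
  by (induction rule: iml1_axiom.induct) simp_all

lemma ex_prime: "{A. ev A} \<in> canW"
proof -
  have "iml1_theory {A. ev A}"
    unfolding iml1_theory_def by (simp add: ax_ev)
  then show ?thesis unfolding canW_def prime_theory_def by simp
qed

lemma AB: "w \<in> canW \<Longrightarrow> canA w \<subseteq> canB w"
proof
  fix v assume "v \<in> canA w"
  then have v: "v \<in> canW" "w \<subseteq> v" unfolding canA_def by blast+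
  then have th: "iml1_theory v" unfolding canW_def prime_theory_def by blast
  have "\<forall>A. Dlt A \<in> w \<longrightarrow> A \<in> v"
  proof (intro allI impI)
    fix A assume "Dlt A \<in> w"
    then have "Dlt A \<in> v" using v by blast
    moreover have "Imp (Dlt A) A \<in> v" using th iml1_axiom.axT unfolding iml1_theory_def by blast
    ultimately show "A \<in> v" using th unfolding iml1_theory_def by blast
  qed
  then show "v \<in> canB w" using v unfolding canB_def by blast
qed

lemma inter_eq: "w \<in> canW \<Longrightarrow> \<Inter>(canN w) = canA w"
proof -
  assume w: "w \<in> canW"
  have "canA w \<in> canN w" using AB[OF w] unfolding canN_def canA_def by blast
  then show ?thesis unfolding canN_def by blast
qed

lemma union_eq: "w \<in> canW \<Longrightarrow> \<Union>(canN w) = canB w"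
proof -
  assume w: "w \<in> canW"
  have "canB w \<in> canN w" using AB[OF w] unfolding canN_def canB_def by blast
  then show ?thesis unfolding canN_def by blast
qed

theorem lemma4p3:
  shows "nIML1_model canW canN canV"
  unfolding nIML1_model_def
proof (intro conjI ballI allI impI)
  show "canW \<noteq> {}" using ex_prime by blast
next
  fix w assume "w \<in> canW" then show "canN w \<subseteq> Pow canW" unfolding canN_def by blast
next
  fix q show "canV q \<subseteq> canW" unfolding canV_def by blast
next
  fix w assume w: "w \<in> canW"
  show "w \<in> \<Inter>(canN w)" using w unfolding inter_eq[OF w] canA_def by blast
next
  fix w assume w: "w \<in> canW"
  show "\<Inter>(canN w) \<in> canN w" using AB[OF w] unfolding inter_eq[OF w] canN_def canA_def by blast
next
  fix w u assume w: "w \<in> canW" and "u \<in> \<Inter>(canN w)"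
  then have u: "u \<in> canW" "w \<subseteq> u" unfolding inter_eq[OF w] canA_def by blast+
  show "\<Inter>(canN u) \<subseteq> \<Inter>(canN w)" unfolding inter_eq[OF w] inter_eq[OF u(1)] canA_def
    using u by blast
next
  fix w u assume w: "w \<in> canW" and "u \<in> \<Inter>(canN w)"
  then have u: "u \<in> canW" "w \<subseteq> u" unfolding inter_eq[OF w] canA_def by blast+
  show "\<Union>(canN u) \<subseteq> \<Union>(canN w)" unfolding union_eq[OF w] union_eq[OF u(1)] canB_def
    using u by blast
next
  fix w X assume w: "w \<in> canW" and X: "\<Inter>(canN w) \<subseteq> X \<and> X \<subseteq> \<Union>(canN w)"
  then show "X \<in> canN w" unfolding inter_eq[OF w] union_eq[OF w] canN_def canB_def by blast
next
  fix q w assume w: "w \<in> canW" and "w \<in> canV q"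
  then show "\<Inter>(canN w) \<subseteq> canV q" unfolding inter_eq[OF w] canV_def canA_def by blast
qed

end
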